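(* Let $A$ be a general metric space. (a) If $\mathcal F$ is a weakly flat filter on $A$ then $M^-(\mathcal F)$ is a $\mathcal P_1$-flat left module; if $\mathcal F$ is flat then $M^-(\mathcal F)$ is $\mathcal P_2$-flat. (b) If $M$ is a $\mathcal P_1$-flat left module then $\mathcal F(M)$ is a weakly flat filter on $A$ (with filter basis $\{\Gamma(M)(\epsilon):\epsilon>0\}$); if $M$ is $\mathcal P_2$-flat then $\mathcal F(M)$ is flat. (c) Both assignments are monotone: $\mathcal F_1\supseteq\mathcal F_2$ implies $M^-(\mathcal F_1)\Rightarrow M^-(\mathcal F_2)$, and $M_1\Rightarrow M_2$ implies $\mathcal F(M_1)\supseteq\mathcal F(M_2)$. (d) For every weakly flat filter $\mathcal F$ and every left module $M$: $\mathcal F\supseteq\mathcal F(M)$ iff $M^-(\mathcal F)\Rightarrow M$. (e) For every $\mathcal P_1$-flat left module $M$, $M^-(\mathcal F(M))=M$. Consequently, with $\mathrm{WFil}(A)$ (resp. $\mathrm{FFil}(A)$) the preorder of weakly flat (resp. flat) filters ordered by reverse inclusion, $\mathcal F\mapsto M^-(\mathcal F)$ is a reflector $\mathrm{WFil}(A)\to\mathrm{Flat}_{\mathcal P_1}(A)_0$ (resp. $\mathrm{FFil}(A)\to\mathrm{Flat}_{\mathcal P_2}(A)_0$) whose right adjoint $M\mapsto\mathcal F(M)$ is full (and injective).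
   Context: $\bar{\mathbb R}_+=[0,\infty]$ is the symmetric monoidal closed category with an arrow $x\to y$ iff $x\ge y$, tensor $+$ ($x+\infty=\infty$), unit $0$, internal hom $[x,y]=\max(y-x,0)$ for finite $x,y$, $[x,\infty]=\infty$ for $x<\infty$, $[\infty,y]=0$; $\inf\emptyset=\infty$, $\sup\emptyset=0$. A general metric space $A$ is a set with $A(-,-):A\times A\to[0,\infty]$ such that $A(x,x)=0$ and $A(x,z)\le A(x,y)+A(y,z)$ (no symmetry or separation assumed). A left module on $A$ is a map $M:A\to[0,\infty]$ with $M(x)\le M(y)+A(x,y)$ for all $x,y$; a right module is $N:A\to[0,\infty]$ with $N(y)\le A(x,y)+N(x)$. For left modules, $M\Rightarrow M'$ means $M(x)\ge M'(x)$ for all $x$. A left module $M$ is $\mathcal P_1$-flat iff (F1) $\inf_x M(x)=0$ and (F3) for every $v\in[0,\infty]$ and every right module $N$, $\inf_x(M(x)+[v,N(x)])=[v,\inf_x(M(x)+N(x))]$; $M$ is $\mathcal P_2$-flat iff (F3) holds and (F2) for every finite (possibly empty) family $(N_i)_{i\in I}$ of right modules, $\inf_x(M(x)+\max_i N_i(x))=\max_i\inf_x(M(x)+N_i(x))$ (max of the empty family is $0$). (These are the specialisations of enriched $\mathcal P_1$-/$\mathcal P_2$-flatness, $\mathcal P_1$ = weights on the empty or unit category, $\mathcal P_2$ = weights on categories with finitely many objects.) $\mathrm{Flat}_{\mathcal P_k}(A)_0$ is the preorder of $\mathcal P_k$-flat left modules under $\Rightarrow$. A filter on $A$ is a nonempty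 set of nonempty subsets closed under finite intersections and supersets. For $t:A\to[0,\infty]$, $\lim^+_{\mathcal F}t=\inf_{f\in\mathcal F}\sup_{x\in f}t(x)$ and $\lim^-_{\mathcal F}t=\sup_{f\in\mathcal F}\inf_{x\in f}t(x)$. $M^-(\mathcal F)$ is the left module $x\mapsto\lim^-_{y\in\mathcal F}A(x,y)$. $\mathcal F$ is weakly flat iff $\lim^+_{\mathcal F}M^-(\mathcal F)=0$, equivalently: for every $\epsilon>0$ there is $f\in\mathcal F$ such that for all $x\in f$ and all $g\in\mathcal F$ there is $y\in g$ with $A(x,y)\le\epsilon$. $\mathcal F$ is flat iff for every $\epsilon>0$ there is $f\in\mathcal F$ such that for every finite family $x_1,\dots,x_n\in f$ and every $g\in\mathcal F$ there is $y\in g$ with $A(x_i,y)\le\epsilon$ for all $i$. For a left module $M$, $\Gamma(M)(\epsilon)=\{x\in A: M(x)\le\epsilon\}$ and $\mathcal F(M)$ is the set of subsets of $A$ containing some $\Gamma(M)(\epsilon)$ with $\epsilon>0$. *)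

theory Defs
  imports "HOL-Library.Extended_Nonnegative_Real"
begin

text \<open>Values in [0,infinity] are modelled by ennreal. The carrier of the general
metric space is the whole type 'a; the distance is A :: 'a => 'a => ennreal.\<close>

definition hom :: "ennreal \<Rightarrow> ennreal \<Rightarrow> ennreal" where
  "hom x y = (if x = top then 0 else if y = top then top else y - x)"

definition gmetric :: "('a \<Rightarrow> 'a \<Rightarrow> ennreal) \<Rightarrow> bool" where
  "gmetric A \<longleftrightarrow> (\<forall>x. A x x = 0) \<and> (\<forall>x y z. A x z \<le> A x y + A y z)"

definition left_module :: "('a \<Rightarrow> 'a \<Rightarrow> ennreal) \<Rightarrow> ('a \<Rightarrow> ennreal) \<Rightarrow> bool" where
  "left_module A M \<longleftrightarrow> (\<forall>x y. M x \<le> M y + A x y)"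

definition right_module :: "('a \<Rightarrow> 'a \<Rightarrow> ennreal) \<Rightarrow> ('a \<Rightarrow> ennreal) \<Rightarrow> bool" where
  "right_module A N \<longleftrightarrow> (\<forall>x y. N y \<le> A x y + N x)"

definition mimp :: "('a \<Rightarrow> ennreal) \<Rightarrow> ('a \<Rightarrow> ennreal) \<Rightarrow> bool" where
  "mimp M M' \<longleftrightarrow> (\<forall>x. M' x \<le> M x)"

definition flatF3 :: "('a \<Rightarrow> 'a \<Rightarrow> ennreal) \<Rightarrow> ('a \<Rightarrow> ennreal) \<Rightarrow> bool" where
  "flatF3 A M \<longleftrightarrow> (\<forall>v N. right_module A N \<longrightarrow>
      (INF x. M x + hom v (N x)) = hom v (INF x. M x + N x))"

definition flatF2 :: "('a \<Rightarrow> 'a \<Rightarrow> ennreal) \<Rightarrow> ('a \<Rightarrow> ennreal) \<Rightarrow> bool" where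
  "flatF2 A M \<longleftrightarrow> (\<forall>(I::nat set) (N::nat \<Rightarrow> 'a \<Rightarrow> ennreal). finite I \<longrightarrow>
      (\<forall>i\<in>I. right_module A (N i)) \<longrightarrow>
      (INF x. M x + (SUP i\<in>I. N i x)) = (SUP i\<in>I. INF x. M x + N i x))"

definition P1_flat :: "('a \<Rightarrow> 'a \<Rightarrow> ennreal) \<Rightarrow> ('a \<Rightarrow> ennreal) \<Rightarrow> bool" where
  "P1_flat A M \<longleftrightarrow> left_module A M \<and> (INF x. M x) = 0 \<and> flatF3 A M"

definition P2_flat :: "('a \<Rightarrow> 'a \<Rightarrow> ennreal) \<Rightarrow> ('a \<Rightarrow> ennreal) \<Rightarrow> bool" where
  "P2_flat A M \<longleftrightarrow> left_module A M \<and> flatF3 A M \<and> flatF2 A M"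

definition is_filter_on :: "'a set set \<Rightarrow> bool" where
  "is_filter_on F \<longleftrightarrow> F \<noteq> {} \<and> (\<forall>f\<in>F. f \<noteq> {})
     \<and> (\<forall>f\<in>F. \<forall>g\<in>F. f \<inter> g \<in> F) \<and> (\<forall>f\<in>F. \<forall>g. f \<subseteq> g \<longrightarrow> g \<in> F)"

definition lim_plus :: "'a set set \<Rightarrow> ('a \<Rightarrow> ennreal) \<Rightarrow> ennreal" where
  "lim_plus F t = (INF f\<in>F. SUP x\<in>f. t x)"

definition lim_minus :: "'a set set \<Rightarrow> ('a \<Rightarrow> ennreal) \<Rightarrow> ennreal" where
  "lim_minus F t = (SUP f\<in>F. INF x\<in>f. t x)"

definition Mminus :: "('a \<Rightarrow> 'a \<Rightarrow> ennreal) \<Rightarrow> 'a set set \<Rightarrow> 'a \<Rightarrow> ennreal" where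
  "Mminus A F x = lim_minus F (\<lambda>y. A x y)"

definition weakly_flat :: "('a \<Rightarrow> 'a \<Rightarrow> ennreal) \<Rightarrow> 'a set set \<Rightarrow> bool" where
  "weakly_flat A F \<longleftrightarrow> is_filter_on F \<and> lim_plus F (Mminus A F) = 0"

definition flat_filter :: "('a \<Rightarrow> 'a \<Rightarrow> ennreal) \<Rightarrow> 'a set set \<Rightarrow> bool" where
  "flat_filter A F \<longleftrightarrow> is_filter_on F \<and>
     (\<forall>\<epsilon>::ennreal. \<epsilon> > 0 \<longrightarrow> (\<exists>f\<in>F. \<forall>S. finite S \<and> S \<subseteq> f \<longrightarrow>
        (\<forall>g\<in>F. \<exists>y\<in>g. \<forall>x\<in>S. A x y \<le> \<epsilon>)))"

definition Gamma :: "('a \<Rightarrow> ennreal) \<Rightarrow> ennreal \<Rightarrow> 'a set" where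
  "Gamma M \<epsilon> = {x. M x \<le> \<epsilon>}"

definition FM :: "('a \<Rightarrow> ennreal) \<Rightarrow> 'a set set" where
  "FM M = {S. \<exists>\<epsilon>::ennreal. \<epsilon> > 0 \<and> Gamma M \<epsilon> \<subseteq> S}"

end

theory Submission
  imports Defs
begin


lemma hom_le_iff: "hom v a \<le> w \<longleftrightarrow> a \<le> v + (w::ennreal)"
  by (auto simp: hom_def ennreal_minus_le_iff top_unique)

lemma hom_ge: "a \<le> v + hom v a"
  using hom_le_iff by blast

lemma hom_mono: "a \<le> b \<Longrightarrow> hom v a \<le> hom v b"
  by (meson hom_ge hom_le_iff order_trans)

lemma hom_zero: "a \<le> v \<Longrightarrow> hom v a = 0"
  using hom_le_iff[of v a 0] by simp

lemma less_add_eps: "(a::ennreal) < top \<Longrightarrow> 0 < e \<Longrightarrow> a < a + ennreal e"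
  using ennreal_add_left_cancel_less[of a 0 "ennreal e"] by (simp add: less_top)

lemma INF_add_const_le:
  fixes f :: "'b \<Rightarrow> ennreal"
  shows "(INF y\<in>S. f y + c) \<le> (INF y\<in>S. f y) + c"
proof (cases "S = {}")
  case True then show ?thesis by simp
next
  case False
  show ?thesis
  proof (rule ennreal_le_epsilon)
    fix e :: real assume lt: "(INF y\<in>S. f y) + c < top" and e: "0 < e"
    then have "(INF y\<in>S. f y) < (INF y\<in>S. f y) + ennreal e"
      proof -
      have "(INF y\<in>S. f y) < top" using lt by (simp only: ennreal_add_less_top)
      then show ?thesis using less_add_eps e by blast
    qed
    then obtain y where y: "y \<in> S" "f y < (INF y\<in>S. f y) + ennreal e"
      by (auto simp: INF_less_iff)
    have "(INF y\<in>S. f y + c) \<le> f y + c" using y by (intro INF_lower)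
    also have "\<dots> \<le> (INF y\<in>S. f y) + c + ennreal e"
      proof -
      have "f y + c \<le> (INF y\<in>S. f y) + ennreal e + c" using y(2) by (intro add_right_mono) simp
      then show ?thesis by (simp add: ac_simps)
    qed
    finally show "(INF y\<in>S. f y + c) \<le> (INF y\<in>S. f y) + c + ennreal e" .
  qed
qed

lemma INF_const_add_le:
  fixes f :: "'b \<Rightarrow> ennreal"
  shows "(INF y\<in>S. c + f y) \<le> c + (INF y\<in>S. f y)"
  using INF_add_const_le[where f=f and S=S and c=c] by (simp add: add.commute)

lemma hom_INF:
  fixes g :: "'b \<Rightarrow> ennreal"
  assumes "S \<noteq> {}"
  shows "(INF y\<in>S. hom v (g y)) \<le> hom v (INF y\<in>S. g y)"
proof (rule ennreal_le_epsilon)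
  fix e :: real assume lt: "hom v (INF y\<in>S. g y) < top" and e: "0 < e"
  show "(INF y\<in>S. hom v (g y)) \<le> hom v (INF y\<in>S. g y) + ennreal e"
  proof (cases "v = top")
    case True
    then show ?thesis using assms by (simp add: hom_def)
  next
    case False
    let ?a = "INF y\<in>S. g y"
    have "?a \<noteq> top"
    proof
      assume "?a = top" then have "hom v ?a = top" using False by (simp add: hom_def)
      then show False using lt by simp
    qed
    then have "?a < top" using less_top by blast
    then have "?a < ?a + ennreal e" using e
      by (intro less_add_eps)
    then obtain y where y: "y \<in> S" "g y < ?a + ennreal e"
      by (auto simp: INF_less_iff)
    have "g y \<le> v + hom v ?a + ennreal e"
      using y(2) hom_ge[of ?a v] by (meson add_right_mono less_imp_le order_trans)
    then have "hom v (g y) \<le> hom v ?a + ennreal e"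
      by (simp add: hom_le_iff add.assoc)
    then show ?thesis using y(1) by (meson INF_lower order_trans)
  qed
qed



lemma yoneda:
  assumes "gmetric A" "left_module A M"
  shows "(INF y. M y + A x y) = M x"
proof (rule antisym)
  show "(INF y. M y + A x y) \<le> M x"
    using assms(1) by (intro INF_lower2[of x]) (auto simp: gmetric_def)
  show "M x \<le> (INF y. M y + A x y)"
    using assms(2) by (auto simp: left_module_def intro!: INF_greatest)
qed

lemma right_module_dist:
  assumes "gmetric A" shows "right_module A (\<lambda>y. A x y)"
  using assms unfolding gmetric_def right_module_def by (metis add.commute)

lemma right_module_SUP:
  assumes "\<And>i. i \<in> I \<Longrightarrow> right_module A (N i)"
  shows "right_module A (\<lambda>y. SUP i\<in>I. N i y)"
  unfolding right_module_def
proof (intro allI SUP_least)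
  fix x y i assume i: "i \<in> I"
  have "N i y \<le> A x y + N i x" using assms[OF i] by (auto simp: right_module_def)
  also have "\<dots> \<le> A x y + (SUP i\<in>I. N i x)" using i by (intro add_left_mono SUP_upper)
  finally show "N i y \<le> A x y + (SUP i\<in>I. N i x)" .
qed

lemma filter_ne: "is_filter_on F \<Longrightarrow> f \<in> F \<Longrightarrow> f \<noteq> {}"
  by (auto simp: is_filter_on_def)

lemma wf_unpack:
  assumes "weakly_flat A F" "0 < e"
  shows "\<exists>f\<in>F. \<forall>x\<in>f. Mminus A F x \<le> e"
proof -
  have "(INF f\<in>F. SUP x\<in>f. Mminus A F x) < e"
    using assms by (simp add: weakly_flat_def lim_plus_def)
  then obtain f where "f \<in> F" "(SUP x\<in>f. Mminus A F x) < e"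
    by (auto simp: INF_less_iff)
  then show ?thesis by (meson SUP_upper less_imp_le order_trans)
qed

lemma keyN:
  assumes "f \<in> F" "right_module A N"
  shows "(INF y\<in>f. N y) \<le> Mminus A F x + N x"
proof -
  have "(INF y\<in>f. N y) \<le> (INF y\<in>f. A x y + N x)"
    using assms(2) by (intro INF_mono) (auto simp: right_module_def)
  also have "\<dots> \<le> (INF y\<in>f. A x y) + N x" by (rule INF_add_const_le)
  also have "\<dots> \<le> Mminus A F x + N x"
    unfolding Mminus_def lim_minus_def using assms(1) by (intro add_right_mono SUP_upper)
  finally show ?thesis .
qed

lemma Mminus_left_module:
  assumes "gmetric A" shows "left_module A (Mminus A F)"
  unfolding left_module_def
proof (intro allI)
  fix x y
  show "Mminus A F x \<le> Mminus A F y + A x y"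
    unfolding Mminus_def lim_minus_def
  proof (intro SUP_least)
    fix f assume f: "f \<in> F"
    have "(INF z\<in>f. A x z) \<le> (INF z\<in>f. A x y + A y z)"
      using assms unfolding gmetric_def by (intro INF_mono) blast
    also have "\<dots> \<le> A x y + (INF z\<in>f. A y z)" by (rule INF_const_add_le)
    also have "\<dots> \<le> A x y + (SUP f\<in>F. INF z\<in>f. A y z)"
      using f by (intro add_left_mono SUP_upper)
    finally show "(INF z\<in>f. A x z) \<le> (SUP f\<in>F. INF z\<in>f. A y z) + A x y"
      by (simp add: add.commute)
  qed
qed

lemma wf_F1:
  assumes "weakly_flat A F" shows "(INF x. Mminus A F x) = 0"
proof -
  have "(INF x. Mminus A F x) \<le> 0"
  proof (rule ennreal_le_epsilon)
    fix e :: real assume "0 < e"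
    then obtain f where f: "f \<in> F" "\<forall>x\<in>f. Mminus A F x \<le> ennreal e"
      using wf_unpack[OF assms, of "ennreal e"] by auto
    then obtain x where "x \<in> f"
      using assms filter_ne by (fastforce simp: weakly_flat_def)
    then show "(INF x. Mminus A F x) \<le> 0 + ennreal e"
      using f by (auto intro: INF_lower2)
  qed
  then show ?thesis by simp
qed

lemma wf_F3:
  assumes "weakly_flat A F" "right_module A N"
  shows "(INF x. Mminus A F x + hom v (N x)) = hom v (INF x. Mminus A F x + N x)"
    (is "?L = hom v ?R")
proof (rule antisym)
  show "hom v ?R \<le> ?L"
  proof (intro INF_greatest)
    fix x
    have "?R \<le> Mminus A F x + N x" by (rule INF_lower) simp
    also have "\<dots> \<le> Mminus A F x + (v + hom v (N x))" by (intro add_left_mono hom_ge)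
    finally show "hom v ?R \<le> Mminus A F x + hom v (N x)"
      by (simp add: hom_le_iff ac_simps)
  qed
  show "?L \<le> hom v ?R"
  proof (rule ennreal_le_epsilon)
    fix e :: real assume "0 < e"
    then obtain f where f: "f \<in> F" "\<forall>x\<in>f. Mminus A F x \<le> ennreal e"
      using wf_unpack[OF assms(1), of "ennreal e"] by auto
    have ne: "f \<noteq> {}" using assms f filter_ne by (fastforce simp: weakly_flat_def)
    have "?L \<le> (INF x\<in>f. Mminus A F x + hom v (N x))" by (intro INF_mono) auto
    also have "\<dots> \<le> (INF x\<in>f. ennreal e + hom v (N x))"
      using f by (intro INF_mono) (auto intro: add_right_mono)
    also have "\<dots> \<le> ennreal e + (INF x\<in>f. hom v (N x))" by (rule INF_const_add_le)
    also have "\<dots> \<le> ennreal e + hom v (INF x\<in>f. N x)" using ne by (intro add_left_mono hom_INF)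
    also have "\<dots> \<le> ennreal e + hom v ?R"
      using keyN[OF f(1) assms(2)] by (intro add_left_mono hom_mono INF_greatest)
    finally show "?L \<le> hom v ?R + ennreal e" by (simp add: add.commute)
  qed
qed

lemma wf_P1:
  assumes "gmetric A" "weakly_flat A F" shows "P1_flat A (Mminus A F)"
  using assms Mminus_left_module wf_F1 wf_F3 by (auto simp: P1_flat_def flatF3_def)



lemma flat_unpack:
  assumes "flat_filter A F" "0 < e"
  shows "\<exists>f\<in>F. \<forall>S. finite S \<and> S \<subseteq> f \<longrightarrow> (\<forall>g\<in>F. \<exists>y\<in>g. \<forall>x\<in>S. A x y \<le> e)"
  using assms by (auto simp: flat_filter_def)

lemma flat_wf:
  assumes "flat_filter A F" shows "weakly_flat A F"
proof -
  have fil: "is_filter_on F" using assms by (simp add: flat_filter_def)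
  have "lim_plus F (Mminus A F) \<le> 0"
  proof (rule ennreal_le_epsilon)
    fix e :: real assume "0 < e"
    then obtain f where f: "f \<in> F"
      "\<forall>S. finite S \<and> S \<subseteq> f \<longrightarrow> (\<forall>g\<in>F. \<exists>y\<in>g. \<forall>x\<in>S. A x y \<le> ennreal e)"
      using flat_unpack[OF assms, of "ennreal e"] by auto
    have "Mminus A F x \<le> ennreal e" if x: "x \<in> f" for x
      unfolding Mminus_def lim_minus_def
    proof (intro SUP_least)
      fix g assume g: "g \<in> F"
      from f(2)[rule_format, of "{x}" g] x g obtain y where "y \<in> g" "A x y \<le> ennreal e" by blast
      then show "(INF y\<in>g. A x y) \<le> ennreal e" by (meson INF_lower order_trans)
    qed
    then have "(SUP x\<in>f. Mminus A F x) \<le> ennreal e" by (intro SUP_least)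
    then show "lim_plus F (Mminus A F) \<le> 0 + ennreal e"
      unfolding lim_plus_def using f(1) by (metis INF_lower2 add_0)
  qed
  then show ?thesis using fil by (simp add: weakly_flat_def)
qed

lemma flat_F2:
  assumes "flat_filter A F" "finite I" "\<forall>i\<in>I. right_module A (N i)"
  shows "(INF x. Mminus A F x + (SUP i\<in>I. N i x)) = (SUP i\<in>I. INF x. Mminus A F x + N i x)"
    (is "?L = ?R")
proof (rule antisym)
  show "?R \<le> ?L"
  proof (intro SUP_least INF_greatest)
    fix i x assume "i \<in> I"
    then have "Mminus A F x + N i x \<le> Mminus A F x + (SUP i\<in>I. N i x)"
      by (intro add_left_mono SUP_upper)
    then show "(INF x. Mminus A F x + N i x) \<le> Mminus A F x + (SUP i\<in>I. N i x)"
      by (meson INF_lower2 UNIV_I)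
  qed
  show "?L \<le> ?R"
  proof (rule ennreal_le_epsilon)
    fix e :: real assume Rt: "?R < top" and e: "0 < e"
    define d where "d = e / 3"
    have d: "0 < d" using e by (simp add: d_def)
    have wf: "weakly_flat A F" using flat_wf[OF assms(1)] .
    obtain f where f: "f \<in> F"
      "\<forall>S. finite S \<and> S \<subseteq> f \<longrightarrow> (\<forall>g\<in>F. \<exists>y\<in>g. \<forall>x\<in>S. A x y \<le> ennreal d)"
      using flat_unpack[OF assms(1), of "ennreal d"] d by auto
    obtain f' where f': "f' \<in> F" "\<forall>x\<in>f'. Mminus A F x \<le> ennreal d"
      using wf_unpack[OF wf, of "ennreal d"] d by auto
    have "\<exists>z\<in>f. N i z < ?R + ennreal d" if i: "i \<in> I" for i
    proof -
      have "(INF y\<in>f. N i y) \<le> (INF x. Mminus A F x + N i x)"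
        using keyN[OF f(1)] assms(3) i by (intro INF_greatest) auto
      also have "\<dots> \<le> ?R" using i by (rule SUP_upper)
      also have "\<dots> < ?R + ennreal d" using Rt d by (intro less_add_eps)
      finally show ?thesis by (auto simp: INF_less_iff)
    qed
    then have "\<forall>i\<in>I. \<exists>z. z \<in> f \<and> N i z < ?R + ennreal d" by blast
    then have "\<exists>xs. \<forall>i\<in>I. xs i \<in> f \<and> N i (xs i) < ?R + ennreal d" by (rule bchoice)
    then obtain xs where xs: "\<forall>i\<in>I. xs i \<in> f \<and> N i (xs i) < ?R + ennreal d"
      by blast
    have "finite (xs ` I) \<and> xs ` I \<subseteq> f" using xs assms(2) by auto
    then obtain y where y: "y \<in> f'" "\<forall>x\<in>xs ` I. A x y \<le> ennreal d"
      using f(2)[rule_format, of "xs ` I" f'] f'(1) by blast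
    have "(SUP i\<in>I. N i y) \<le> ennreal d + (?R + ennreal d)"
    proof (intro SUP_least)
      fix i assume i: "i \<in> I"
      have "N i y \<le> A (xs i) y + N i (xs i)" using assms(3) i by (auto simp: right_module_def)
      also have "\<dots> \<le> ennreal d + (?R + ennreal d)"
      proof (rule add_mono)
        show "A (xs i) y \<le> ennreal d" using y i by blast
        show "N i (xs i) \<le> ?R + ennreal d" using xs i by (auto intro: less_imp_le)
      qed
      finally show "N i y \<le> ennreal d + (?R + ennreal d)" .
    qed
    then have "?L \<le> ennreal d + (ennreal d + (?R + ennreal d))"
    proof -
      have "Mminus A F y \<le> ennreal d" using y f' by blast
      then have "Mminus A F y + (SUP i\<in>I. N i y) \<le> ennreal d + (ennreal d + (?R + ennreal d))"
        using \<open>(SUP i\<in>I. N i y) \<le> _\<close> by (rule add_mono)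
      then show ?thesis by (rule INF_lower2[OF UNIV_I])
    qed
    also have "\<dots> = ?R + (ennreal d + ennreal d + ennreal d)" by (simp add: ac_simps)
    also have "ennreal d + ennreal d + ennreal d = ennreal e"
      using d by (simp only: ennreal_plus[symmetric] less_imp_le add_nonneg_nonneg) (simp add: d_def)
    finally show "?L \<le> ?R + ennreal e" .
  qed
qed

lemma flat_P2:
  assumes "gmetric A" "flat_filter A F" shows "P2_flat A (Mminus A F)"
proof -
  have p1: "P1_flat A (Mminus A F)" using wf_P1[OF assms(1) flat_wf[OF assms(2)]] .
  have "flatF2 A (Mminus A F)" unfolding flatF2_def
    using flat_F2[OF assms(2)] by blast
  then show ?thesis using p1 by (simp add: P2_flat_def P1_flat_def)
qed



lemma Gamma_FM: "0 < e \<Longrightarrow> Gamma M e \<in> FM M"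
  by (auto simp: FM_def)

lemma FM_filter:
  assumes "(INF x. M x) = 0" shows "is_filter_on (FM M)"
  unfolding is_filter_on_def
proof (intro conjI ballI allI impI)
  show "FM M \<noteq> {}" using Gamma_FM[of 1 M] by auto
next
  fix f assume "f \<in> FM M"
  then obtain e where e: "0 < e" "Gamma M e \<subseteq> f" by (auto simp: FM_def)
  have "(INF x. M x) < e" using assms e by simp
  then obtain x where "M x < e" by (auto simp: INF_less_iff)
  then have "x \<in> f" using e by (auto simp: Gamma_def)
  then show "f \<noteq> {}" by auto
next
  fix f g assume "f \<in> FM M" "g \<in> FM M"
  then obtain e1 e2 where e: "0 < e1" "Gamma M e1 \<subseteq> f" "0 < e2" "Gamma M e2 \<subseteq> g"
    by (auto simp: FM_def)
  have "Gamma M (min e1 e2) \<subseteq> f \<inter> g" using e by (auto simp: Gamma_def)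
  moreover have "0 < min e1 e2" using e by simp
  ultimately show "f \<inter> g \<in> FM M" unfolding FM_def by blast
next
  fix f g assume "f \<in> FM M" "f \<subseteq> g"
  then show "g \<in> FM M" by (auto simp: FM_def)
qed

lemma Gamma_in_imp:
  assumes "left_module A M" "\<forall>e>0. Gamma M e \<in> F"
  shows "M x \<le> Mminus A F x"
proof (rule ennreal_le_epsilon)
  fix e :: real assume "0 < e"
  then have G: "Gamma M (ennreal e) \<in> F" using assms(2) by simp
  have "M x \<le> (INF y\<in>Gamma M (ennreal e). A x y + ennreal e)"
  proof (intro INF_greatest)
    fix y assume "y \<in> Gamma M (ennreal e)"
    then have "M y \<le> ennreal e" by (simp add: Gamma_def)
    moreover have "M x \<le> M y + A x y" using assms(1) by (simp add: left_module_def)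
    ultimately show "M x \<le> A x y + ennreal e"
    proof -
      have "M y + A x y \<le> ennreal e + A x y" using \<open>M y \<le> ennreal e\<close> by (rule add_right_mono)
      with \<open>M x \<le> M y + A x y\<close> have "M x \<le> ennreal e + A x y" by (rule order_trans)
      then show ?thesis by (simp only: add.commute)
    qed
  qed
  also have "\<dots> \<le> (INF y\<in>Gamma M (ennreal e). A x y) + ennreal e" by (rule INF_add_const_le)
  also have "\<dots> \<le> Mminus A F x + ennreal e"
    unfolding Mminus_def lim_minus_def using G by (intro add_right_mono SUP_upper)
  finally show "M x \<le> Mminus A F x + ennreal e" .
qed

lemma F3_point:
  assumes "gmetric A" "left_module A M" "flatF3 A M" "M x < top" "0 < eta"
  shows "\<exists>y. M y < eta \<and> A x y \<le> M x + eta"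
proof -
  have "(INF y. M y + hom (M x) (A x y)) = hom (M x) (INF y. M y + A x y)"
    using assms(3) right_module_dist[OF assms(1)] by (simp add: flatF3_def)
  also have "\<dots> = 0" using yoneda[OF assms(1,2)] by (simp add: hom_zero)
  finally have "(INF y. M y + hom (M x) (A x y)) < eta" using assms(5) by simp
  then obtain y where y: "M y + hom (M x) (A x y) < eta" by (auto simp: INF_less_iff)
  have "M y \<le> M y + hom (M x) (A x y)" by simp
  then have "M y < eta" using y by (rule le_less_trans)
  moreover have "hom (M x) (A x y) \<le> M y + hom (M x) (A x y)" by simp
  then have "hom (M x) (A x y) < eta" using y by (rule le_less_trans)
  then have "hom (M x) (A x y) \<le> eta" by (rule less_imp_le)
  then have "A x y \<le> M x + eta" by (simp add: hom_le_iff)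
  ultimately show ?thesis by blast
qed

lemma Mminus_FM_le:
  assumes "gmetric A" "left_module A M" "flatF3 A M"
  shows "Mminus A (FM M) x \<le> M x"
  unfolding Mminus_def lim_minus_def
proof (intro SUP_least)
  fix S assume "S \<in> FM M"
  then obtain eps where eps: "0 < eps" "Gamma M eps \<subseteq> S" by (auto simp: FM_def)
  show "(INF y\<in>S. A x y) \<le> M x"
  proof (rule ennreal_le_epsilon)
    fix e :: real assume Mx: "M x < top" and e: "0 < e"
    have "0 < min eps (ennreal e)" using eps e by simp
    from F3_point[OF assms Mx this] obtain y where
      y: "M y < min eps (ennreal e)" "A x y \<le> M x + min eps (ennreal e)" by blast
    have "y \<in> S" using y(1) eps by (auto simp: Gamma_def)
    then have "(INF y\<in>S. A x y) \<le> A x y" by (rule INF_lower)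
    also have "\<dots> \<le> M x + ennreal e" using y(2)
      by (rule order_trans) (intro add_left_mono min.cobounded2)
    finally show "(INF y\<in>S. A x y) \<le> M x + ennreal e" .
  qed
qed

lemma part_e:
  assumes "gmetric A" "left_module A M" "flatF3 A M"
  shows "Mminus A (FM M) = M"
proof
  fix x show "Mminus A (FM M) x = M x"
    using Mminus_FM_le[OF assms] Gamma_in_imp[OF assms(2), of "FM M" x] Gamma_FM
    by (intro antisym) auto
qed

lemma part_d:
  assumes "weakly_flat A F" "left_module A M"
  shows "FM M \<subseteq> F \<longleftrightarrow> mimp (Mminus A F) M"
proof
  assume "FM M \<subseteq> F"
  then have "\<forall>e>0. Gamma M e \<in> F" using Gamma_FM by blast
  then show "mimp (Mminus A F) M" using Gamma_in_imp[OF assms(2)] by (simp add: mimp_def)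
next
  assume m: "mimp (Mminus A F) M"
  show "FM M \<subseteq> F"
  proof
    fix S assume "S \<in> FM M"
    then obtain eps where eps: "0 < eps" "Gamma M eps \<subseteq> S" by (auto simp: FM_def)
    obtain f where f: "f \<in> F" "\<forall>x\<in>f. Mminus A F x \<le> eps"
      using wf_unpack[OF assms(1) eps(1)] by blast
    have "f \<subseteq> S" using f eps m unfolding mimp_def Gamma_def by (blast intro: order_trans)
    then show "S \<in> F" using f(1) assms(1) by (auto simp: weakly_flat_def is_filter_on_def)
  qed
qed

lemma part_b1:
  assumes "gmetric A" "P1_flat A M" shows "weakly_flat A (FM M)"
proof -
  have lm: "left_module A M" and i: "(INF x. M x) = 0" and f3: "flatF3 A M"
    using assms by (auto simp: P1_flat_def)
  have "lim_plus (FM M) M \<le> 0"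
  proof (rule ennreal_le_epsilon)
    fix e :: real assume "0 < e"
    then have G: "Gamma M (ennreal e) \<in> FM M" by (intro Gamma_FM) simp
    have "(SUP x\<in>Gamma M (ennreal e). M x) \<le> ennreal e" by (auto simp: Gamma_def intro: SUP_least)
    then show "lim_plus (FM M) M \<le> 0 + ennreal e"
      unfolding lim_plus_def using G by (metis INF_lower2 add_0)
  qed
  then show ?thesis using FM_filter[OF i] part_e[OF assms(1) lm f3]
    by (simp add: weakly_flat_def)
qed

lemma P2_F1:
  assumes "P2_flat A M" shows "(INF x. M x) = 0"
proof -
  have "flatF2 A M" using assms by (simp add: P2_flat_def)
  then have h: "\<forall>(I::nat set) N. finite I \<longrightarrow> (\<forall>i\<in>I. right_module A (N i)) \<longrightarrow>
      (INF x. M x + (SUP i\<in>I. N i x)) = (SUP i\<in>I. INF x. M x + N i x)"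
    by (simp only: flatF2_def)
  have "(INF x. M x + (SUP i\<in>({}::nat set). (0::ennreal))) = (SUP i\<in>({}::nat set). INF x. M x + 0)"
    using h[rule_format, of "{}" "\<lambda>i y. 0"] by simp
  then show ?thesis by (simp only: image_empty Sup_empty bot_ennreal add_0_right)
qed

lemma P2_P1: "P2_flat A M \<Longrightarrow> P1_flat A M"
  using P2_F1[of A M] unfolding P2_flat_def P1_flat_def by blast



lemma part_b2:
  assumes gm: "gmetric A" and p2: "P2_flat A M" shows "flat_filter A (FM M)"
proof -
  have lm: "left_module A M" and f3: "flatF3 A M" and f2: "flatF2 A M"
    using p2 by (auto simp: P2_flat_def)
  have i: "(INF x. M x) = 0" using P2_F1[OF p2] .
  have fil: "is_filter_on (FM M)" using FM_filter[OF i] .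
  have "\<exists>f\<in>FM M. \<forall>S. finite S \<and> S \<subseteq> f \<longrightarrow> (\<forall>g\<in>FM M. \<exists>y\<in>g. \<forall>x\<in>S. A x y \<le> eps)"
    if eps: "0 < eps" for eps :: ennreal
  proof -
    have "\<exists>r::real. 0 < r \<and> ennreal r + ennreal r \<le> eps"
    proof (cases eps rule: ennreal_cases)
      case (real t)
      then have "0 < t" using eps by simp
      have "ennreal (t/2) + ennreal (t/2) = ennreal (t/2 + t/2)"
        using \<open>0 < t\<close> by (intro ennreal_plus[symmetric]) auto
      also have "t/2 + t/2 = t" by simp
      finally have "ennreal (t/2) + ennreal (t/2) \<le> eps" using real by simp
      moreover have "0 < t/2" using \<open>0 < t\<close> by simp
      ultimately show ?thesis by blast
    next
      case top then show ?thesis by (intro exI[of _ 1]) simp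
    qed
    then obtain r :: real where r: "0 < r" "ennreal r + ennreal r \<le> eps" by blast
    have fin: "Gamma M (ennreal r) \<in> FM M" using r by (intro Gamma_FM) simp
    have "\<exists>y\<in>g. \<forall>x\<in>S. A x y \<le> eps"
      if S: "finite S" "S \<subseteq> Gamma M (ennreal r)" and g: "g \<in> FM M" for S g
    proof -
      obtain del where del: "0 < del" "Gamma M del \<subseteq> g" using g unfolding FM_def by blast
      from S(1) obtain n :: nat and h where Sh: "S = h ` {i. i < n}" unfolding finite_conv_nat_seg_image by (elim exE) blast
      define I where "I = {i::nat. i < n}"
      define Nm where "Nm = (\<lambda>y. SUP i\<in>I. A (h i) y)"
      have rmi: "\<And>i. i \<in> I \<Longrightarrow> right_module A (\<lambda>y. A (h i) y)"
        by (rule right_module_dist[OF gm])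
      have rm: "right_module A Nm"
        unfolding Nm_def by (rule right_module_SUP) (rule right_module_dist[OF gm])
      have finI: "finite I" by (simp add: I_def)
      have "(INF y. M y + (SUP i\<in>I. (\<lambda>i y. A (h i) y) i y)) = (SUP i\<in>I. INF y. M y + (\<lambda>i y. A (h i) y) i y)"
        using f2[unfolded flatF2_def, rule_format, OF finI rmi] .
      then have "(INF y. M y + Nm y) = (SUP i\<in>I. INF y. M y + A (h i) y)"
        by (simp only: Nm_def)
      also have "\<dots> = (SUP i\<in>I. M (h i))" by (simp only: yoneda[OF gm lm])
      also have "\<dots> \<le> ennreal r"
      proof (intro SUP_least)
        fix i assume "i \<in> I"
        then have "h i \<in> S" using Sh I_def by blast
        then have "h i \<in> Gamma M (ennreal r)" using S(2) by blast
        then show "M (h i) \<le> ennreal r" by (simp add: Gamma_def)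
      qed
      finally have le: "(INF y. M y + Nm y) \<le> ennreal r" .
      have "(INF y. M y + hom (ennreal r) (Nm y)) = hom (ennreal r) (INF y. M y + Nm y)"
        using f3 rm by (simp add: flatF3_def)
      also have "\<dots> = 0" using le by (rule hom_zero)
      finally have "(INF y. M y + hom (ennreal r) (Nm y)) < min del (ennreal r)"
        using del r by simp
      then obtain y where y: "M y + hom (ennreal r) (Nm y) < min del (ennreal r)"
        unfolding INF_less_iff by blast
      have "M y \<le> M y + hom (ennreal r) (Nm y)" by simp
      then have "M y < min del (ennreal r)" using y by (rule le_less_trans)
      then have "M y < del" by (rule less_le_trans) (rule min.cobounded1)
      then have "y \<in> Gamma M del" by (simp add: Gamma_def)
      then have "y \<in> g" using del(2) by blast
      have "hom (ennreal r) (Nm y) \<le> M y + hom (ennreal r) (Nm y)" by simp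
      then have "hom (ennreal r) (Nm y) < min del (ennreal r)" using y by (rule le_less_trans)
      then have "hom (ennreal r) (Nm y) < ennreal r" by (rule less_le_trans) (rule min.cobounded2)
      then have "hom (ennreal r) (Nm y) \<le> ennreal r" by (rule less_imp_le)
      then have "Nm y \<le> ennreal r + ennreal r" by (simp add: hom_le_iff)
      then have Nmy: "Nm y \<le> eps" using r(2) by (rule order_trans)
      have "\<forall>x\<in>S. A x y \<le> eps"
      proof
        fix x assume "x \<in> S"
        then obtain i where i: "i \<in> I" "x = h i" using Sh I_def by blast
        have "A x y \<le> Nm y" unfolding Nm_def using i by (auto intro: SUP_upper)
        then show "A x y \<le> eps" using Nmy by (rule order_trans)
      qed
      then show ?thesis using \<open>y \<in> g\<close> by blast
    qed
    then show ?thesis using fin by blast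
  qed
  then show ?thesis using fil unfolding flat_filter_def by blast
qed

lemma Mminus_mono: "F2 \<subseteq> F1 \<Longrightarrow> Mminus A F2 x \<le> Mminus A F1 x"
  unfolding Mminus_def lim_minus_def by (rule SUP_subset_mono) auto

lemma FM_mono: "mimp M1 M2 \<Longrightarrow> FM M2 \<subseteq> FM M1"
proof
  fix S assume m: "mimp M1 M2" and "S \<in> FM M2"
  then obtain e where e: "0 < e" "Gamma M2 e \<subseteq> S" by (auto simp: FM_def)
  have "Gamma M1 e \<subseteq> Gamma M2 e"
  proof
    fix x assume "x \<in> Gamma M1 e"
    then have "M1 x \<le> e" by (simp add: Gamma_def)
    moreover have "M2 x \<le> M1 x" using m by (simp add: mimp_def)
    ultimately show "x \<in> Gamma M2 e" by (simp add: Gamma_def)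
  qed
  then show "S \<in> FM M1" using e unfolding FM_def by blast
qed

lemma full_P1:
  assumes "gmetric A" "P1_flat A M1" "P1_flat A M2" "FM M2 \<subseteq> FM M1"
  shows "mimp M1 M2"
  unfolding mimp_def
proof
  fix x
  have e1: "Mminus A (FM M1) = M1" using assms(2) part_e[OF assms(1)] unfolding P1_flat_def by blast
  have e2: "Mminus A (FM M2) = M2" using assms(3) part_e[OF assms(1)] unfolding P1_flat_def by blast
  show "M2 x \<le> M1 x" using Mminus_mono[OF assms(4), of A x] e1 e2 by simp
qed


theorem mainTheorem8:
  fixes A :: "'a \<Rightarrow> 'a \<Rightarrow> ennreal"
  assumes "gmetric A"
  shows
    \<comment> \<open>(a)\<close>
    "(\<forall>F. weakly_flat A F \<longrightarrow> P1_flat A (Mminus A F))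
   \<and> (\<forall>F. flat_filter A F \<longrightarrow> P2_flat A (Mminus A F))
    \<comment> \<open>(b)\<close>
   \<and> (\<forall>M. P1_flat A M \<longrightarrow> weakly_flat A (FM M))
   \<and> (\<forall>M. P2_flat A M \<longrightarrow> flat_filter A (FM M))
    \<comment> \<open>(c)\<close>
   \<and> (\<forall>F1 F2. is_filter_on F1 \<and> is_filter_on F2 \<and> F2 \<subseteq> F1
        \<longrightarrow> mimp (Mminus A F1) (Mminus A F2))
   \<and> (\<forall>M1 M2. left_module A M1 \<and> left_module A M2 \<and> mimp M1 M2
        \<longrightarrow> FM M2 \<subseteq> FM M1)
    \<comment> \<open>(d)\<close>
   \<and> (\<forall>F M. weakly_flat A F \<and> left_module A M
        \<longrightarrow> (FM M \<subseteq> F \<longleftrightarrow> mimp (Mminus A F) M))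
    \<comment> \<open>(e)\<close>
   \<and> (\<forall>M. P1_flat A M \<longrightarrow> Mminus A (FM M) = M)
    \<comment> \<open>consequence: the right adjoint M |-> F(M) is full and injective\<close>
   \<and> (\<forall>M1 M2. P1_flat A M1 \<and> P1_flat A M2 \<and> FM M2 \<subseteq> FM M1 \<longrightarrow> mimp M1 M2)
   \<and> (\<forall>M1 M2. P2_flat A M1 \<and> P2_flat A M2 \<and> FM M2 \<subseteq> FM M1 \<longrightarrow> mimp M1 M2)
   \<and> (\<forall>M1 M2. P1_flat A M1 \<and> P1_flat A M2 \<and> FM M1 = FM M2 \<longrightarrow> M1 = M2)
   \<and> (\<forall>M1 M2. P2_flat A M1 \<and> P2_flat A M2 \<and> FM M1 = FM M2 \<longrightarrow> M1 = M2)"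
proof -
  have a1: "\<forall>F. weakly_flat A F \<longrightarrow> P1_flat A (Mminus A F)" by (intro allI impI) (rule wf_P1[OF assms])
  have a2: "\<forall>F. flat_filter A F \<longrightarrow> P2_flat A (Mminus A F)" by (intro allI impI) (rule flat_P2[OF assms])
  have b1: "\<forall>M. P1_flat A M \<longrightarrow> weakly_flat A (FM M)" by (intro allI impI) (rule part_b1[OF assms])
  have b2: "\<forall>M. P2_flat A M \<longrightarrow> flat_filter A (FM M)" by (intro allI impI) (rule part_b2[OF assms])
  have c1: "\<forall>F1 F2. is_filter_on F1 \<and> is_filter_on F2 \<and> F2 \<subseteq> F1
        \<longrightarrow> mimp (Mminus A F1) (Mminus A F2)"
    unfolding mimp_def by (intro allI impI) (auto intro: Mminus_mono)
  have c2: "\<forall>M1 M2. left_module A M1 \<and> left_module A M2 \<and> mimp M1 M2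
        \<longrightarrow> FM M2 \<subseteq> FM M1" by (intro allI impI) (rule FM_mono, blast)
  have d: "\<forall>F M. weakly_flat A F \<and> left_module A M
        \<longrightarrow> (FM M \<subseteq> F \<longleftrightarrow> mimp (Mminus A F) M)" by (intro allI impI) (rule part_d, blast, blast)
  have e: "\<forall>M. P1_flat A M \<longrightarrow> Mminus A (FM M) = M"
    unfolding P1_flat_def by (intro allI impI) (rule part_e[OF assms], blast, blast)
  have f1: "\<forall>M1 M2. P1_flat A M1 \<and> P1_flat A M2 \<and> FM M2 \<subseteq> FM M1 \<longrightarrow> mimp M1 M2"
    by (intro allI impI) (rule full_P1[OF assms], blast, blast, blast)
  have f2: "\<forall>M1 M2. P2_flat A M1 \<and> P2_flat A M2 \<and> FM M2 \<subseteq> FM M1 \<longrightarrow> mimp M1 M2"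
    by (intro allI impI) (rule full_P1[OF assms], (blast intro: P2_P1)+)
  have i1: "\<forall>M1 M2. P1_flat A M1 \<and> P1_flat A M2 \<and> FM M1 = FM M2 \<longrightarrow> M1 = M2"
  proof (intro allI impI)
    fix M1 M2 assume h: "P1_flat A M1 \<and> P1_flat A M2 \<and> FM M1 = FM M2"
    then have "mimp M1 M2" "mimp M2 M1" using full_P1[OF assms] by auto
    then show "M1 = M2" unfolding mimp_def by (intro ext antisym) auto
  qed
  have i2: "\<forall>M1 M2. P2_flat A M1 \<and> P2_flat A M2 \<and> FM M1 = FM M2 \<longrightarrow> M1 = M2"
    using i1 P2_P1 by meson
  show ?thesis
    apply (intro conjI)
               apply (fact a1)
              apply (fact a2)
             apply (fact b1)
            apply (fact b2)
           apply (fact c1)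
          apply (fact c2)
         apply (fact d)
        apply (fact e)
       apply (fact f1)
      apply (fact f2)
     apply (fact i1)
    apply (fact i2)
    done
qed

end
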